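(* Let $p\in(0,1]$ and consider two independent doors, each initially closed, each opening independently with probability $p$ on every knock on it (and staying open once open). Let $A_{\mathrm{simp}}=(1,2)^\infty$ be the alternating knock sequence $1,2,1,2,\dots$, executed without feedback. Then the expected number of knocks until both doors are open is $\mathbb{T}_{\mathcal{I}}(A_{\mathrm{simp}})=\frac{3}{p}-1$. *)

theory Defs
  imports "HOL-Probability.Probability"
begin

text \<open>Two doors, labelled 1 and 2. A knock sequence is a function A :: nat => nat,
  A k being the door knocked at the k-th knock (k = 0, 1, 2, ...), executed without feedback.
  Randomness: omega !! k says whether the k-th knock would open the door it is applied to;
  these are i.i.d. Doors stay open once opened, so door d is open after the
  first t knocks iff some knock k < t on door d succeeded.\<close>

definition door_open_after :: "(nat \<Rightarrow> nat) \<Rightarrow> bool stream \<Rightarrow> nat \<Rightarrow> nat \<Rightarrow> bool" where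
  "door_open_after A \<omega> d t \<longleftrightarrow> (\<exists>k<t. A k = d \<and> \<omega> !! k)"

definition both_open_after :: "(nat \<Rightarrow> nat) \<Rightarrow> bool stream \<Rightarrow> nat \<Rightarrow> bool" where
  "both_open_after A \<omega> t \<longleftrightarrow> door_open_after A \<omega> 1 t \<and> door_open_after A \<omega> 2 t"

definition knocks_until_open :: "(nat \<Rightarrow> nat) \<Rightarrow> bool stream \<Rightarrow> enat" where
  "knocks_until_open A \<omega> =
     (if \<exists>t. both_open_after A \<omega> t then enat (LEAST t. both_open_after A \<omega> t) else \<infinity>)"

definition knock_space :: "real \<Rightarrow> bool stream measure" where
  "knock_space p = stream_space (measure_pmf (bernoulli_pmf p))"

definition expected_knocks :: "real \<Rightarrow> (nat \<Rightarrow> nat) \<Rightarrow> ennreal" where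
  "expected_knocks p A = (\<integral>\<^sup>+ \<omega>. ennreal_of_enat (knocks_until_open A \<omega>) \<partial>knock_space p)"

definition A_simp :: "nat \<Rightarrow> nat" where
  "A_simp k = (if even k then 1 else 2)"

end

theory Submission
  imports Defs
begin

lemma prob_block:
  fixes p :: real
  assumes p: "0 \<le> p" "p \<le> 1"
  shows "(\<integral>\<^sup>+ \<omega>. (if \<forall>k<t. S k \<longrightarrow> \<not> \<omega> !! k then 1 else 0) \<partial>knock_space p)
         = ennreal ((1 - p) ^ card {k. k < t \<and> S k})"
  using assms
proof (induction t arbitrary: S)
  case 0
  interpret P: prob_space "knock_space p"
    unfolding knock_space_def
    by (rule prob_space.prob_space_stream_space) (rule prob_space_measure_pmf)
  show ?case by (simp add: P.emeasure_space_1)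
next
  case (Suc t)
  have pm: "prob_space (measure_pmf (bernoulli_pmf p))" by (rule prob_space_measure_pmf)
  have meas: "(\<lambda>\<omega>. (if \<forall>k<Suc t. S k \<longrightarrow> \<not> \<omega> !! k then 1 else 0) :: ennreal)
       \<in> borel_measurable (stream_space (measure_pmf (bernoulli_pmf p)))"
    by measurable
  have eq: "\<And>x xs. (\<forall>k<Suc t. S k \<longrightarrow> \<not> (x ## xs) !! k) \<longleftrightarrow>
        ((S 0 \<longrightarrow> \<not> x) \<and> (\<forall>k<t. S (Suc k) \<longrightarrow> \<not> xs !! k))"
    by (auto simp: less_Suc_eq_0_disj)
  have cardeq: "card {k. k < Suc t \<and> S k} = (if S 0 then 1 else 0) + card {k. k < t \<and> S (Suc k)}"
  proof -
    have "{k. k < Suc t \<and> S k} = (if S 0 then {0} else {}) \<union> Suc ` {k. k < t \<and> S (Suc k)}"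
      by (auto simp: less_Suc_eq_0_disj image_iff)
    then show ?thesis by (simp add: card_image)
  qed
  have "(\<integral>\<^sup>+ \<omega>. (if \<forall>k<Suc t. S k \<longrightarrow> \<not> \<omega> !! k then 1 else 0) \<partial>knock_space p)
     = (\<integral>\<^sup>+ x. (\<integral>\<^sup>+ xs. (if S 0 \<longrightarrow> \<not> x then 1 else 0) *
           (if \<forall>k<t. S (Suc k) \<longrightarrow> \<not> xs !! k then 1 else 0) \<partial>knock_space p) \<partial>measure_pmf (bernoulli_pmf p))"
    unfolding knock_space_def
    by (subst prob_space.nn_integral_stream_space[OF pm meas]) (auto simp: eq intro!: nn_integral_cong)
  also have "\<dots> = (\<integral>\<^sup>+ x. (if S 0 \<longrightarrow> \<not> x then 1 else 0) *
           ennreal ((1 - p) ^ card {k. k < t \<and> S (Suc k)}) \<partial>measure_pmf (bernoulli_pmf p))"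
  proof (intro nn_integral_cong)
    fix x
    have m2: "(\<lambda>xs. (if \<forall>k<t. S (Suc k) \<longrightarrow> \<not> xs !! k then 1 else 0) :: ennreal) \<in> borel_measurable (knock_space p)"
      unfolding knock_space_def by measurable
    show "(\<integral>\<^sup>+ xs. (if S 0 \<longrightarrow> \<not> x then 1 else 0) *
           (if \<forall>k<t. S (Suc k) \<longrightarrow> \<not> xs !! k then 1 else 0) \<partial>knock_space p) =
          (if S 0 \<longrightarrow> \<not> x then 1 else 0) * ennreal ((1 - p) ^ card {k. k < t \<and> S (Suc k)})"
      by (subst nn_integral_cmult[OF m2]) (simp add: Suc.IH[OF Suc.prems])
  qed
  also have "\<dots> = ennreal ((1 - p) ^ card {k. k < Suc t \<and> S k})"
  proof -
    let ?c = "ennreal ((1 - p) ^ card {k. k < t \<and> S (Suc k)})"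
    have "(\<integral>\<^sup>+ x. (if S 0 \<longrightarrow> \<not> x then 1 else 0) * ?c \<partial>measure_pmf (bernoulli_pmf p))
        = (if S 0 then 0 else ?c) * ennreal p + ?c * ennreal (1 - p)"
      using Suc.prems by (subst nn_integral_bernoulli_pmf) auto
    also have "\<dots> = ennreal ((1 - p) ^ card {k. k < Suc t \<and> S k})"
    proof (cases "S 0")
      case True then show ?thesis using Suc.prems by (simp add: cardeq ennreal_mult'[symmetric] mult.commute)
    next
      case False
      then have "(if S 0 then 0 else ?c) * ennreal p + ?c * ennreal (1 - p) = ?c * (ennreal p + ennreal (1 - p))"
        by (simp add: distrib_left)
      also have "ennreal p + ennreal (1 - p) = 1" using Suc.prems by (simp flip: ennreal_plus)
      finally show ?thesis using False by (simp add: cardeq)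
    qed
    finally show ?thesis .
  qed
  finally show ?case .
qed

lemma card_all: "card {k. k < t \<and> A_simp k = 1} = (t + 1) div 2 \<and> card {k. k < t \<and> A_simp k = 2} = t div 2"
proof (induction t)
  case 0 then show ?case by simp
next
  case (Suc t)
  have e: "\<And>d. {k. k < Suc t \<and> A_simp k = d} = {k. k < t \<and> A_simp k = d} \<union> (if A_simp t = d then {t} else {})"
    by (auto simp: less_Suc_eq)
  have c: "\<And>d. card {k. k < Suc t \<and> A_simp k = d} = card {k. k < t \<and> A_simp k = d} + (if A_simp t = d then 1 else 0)"
    by (subst e) (auto simp: card_insert_if)
  have a: "A_simp t = (if even t then 1 else 2)" by (simp add: A_simp_def)
  show ?case
  proof (cases "even t")
    case True
    then show ?thesis using Suc c[of 1] c[of 2] a by (auto elim!: evenE)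
  next
    case False
    then show ?thesis using Suc c[of 1] c[of 2] a by (auto elim!: oddE)
  qed
qed

lemma enat_sum:
  assumes mono: "\<And>t s. P t \<Longrightarrow> t \<le> s \<Longrightarrow> P s"
  shows "ennreal_of_enat (if \<exists>t. P t then enat (LEAST t. P t) else \<infinity>) = (\<Sum>t. if P t then 0 else 1)"
proof (cases "\<exists>t. P t")
  case True
  define L where "L = (LEAST t. P t)"
  have PL: "P L" using True unfolding L_def by (metis LeastI)
  have iff: "P t \<longleftrightarrow> L \<le> t" for t
  proof
    assume "P t" then show "L \<le> t" unfolding L_def by (rule Least_le)
  next
    assume "L \<le> t" then show "P t" by (rule mono[OF PL])
  qed
  have "(\<Sum>t. (if P t then 0 else 1) :: ennreal) = (\<Sum>t\<in>{..<L}. (if P t then 0 else 1))"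
    by (rule suminf_finite) (auto simp: iff)
  also have "\<dots> = (\<Sum>t\<in>{..<L}. 1)" by (intro sum.cong) (auto simp: iff)
  finally show ?thesis using True by (simp add: L_def)
next
  case False
  have "(\<Sum>t. ennreal 1) = \<top>"
  proof (rule ccontr)
    assume "(\<Sum>t. ennreal 1) \<noteq> \<top>"
    then have "summable (\<lambda>t. 1::real)" by (intro summable_suminf_not_top) auto
    then have "(\<lambda>t. 1::real) \<longlonglongrightarrow> 0" by (rule summable_LIMSEQ_zero)
    then show False by (simp add: LIMSEQ_const_iff)
  qed
  then show ?thesis using False by simp
qed

lemma real_sums:
  fixes q :: real
  assumes "0 \<le> q" "q < 1"
  shows "(\<lambda>t. q ^ t) sums (1 / (1 - q))"
    and "(\<lambda>t. q ^ (t div 2)) sums (2 / (1 - q))"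
    and "(\<lambda>t. q ^ ((t + 1) div 2)) sums ((1 + q) / (1 - q))"
proof -
  have g: "(\<lambda>t. q ^ t) sums (1 / (1 - q))" using assms geometric_sums[of q] by simp
  then show "(\<lambda>t. q ^ t) sums (1 / (1 - q))" .
  have "(\<lambda>n. if even n then q ^ (n div 2) else q ^ ((n - 1) div 2)) sums (1 / (1 - q) + 1 / (1 - q))"
    by (rule sums_if[OF g g])
  moreover have "(\<lambda>n. if even n then q ^ (n div 2) else q ^ ((n - 1) div 2)) = (\<lambda>t. q ^ (t div 2))"
  proof (rule ext)
    fix n :: nat
    show "(if even n then q ^ (n div 2) else q ^ ((n - 1) div 2)) = q ^ (n div 2)"
    proof (cases "even n")
      case False
      then obtain m where "n = 2 * m + 1" by (rule oddE)
      then show ?thesis by simp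
    qed simp
  qed
  ultimately show "(\<lambda>t. q ^ (t div 2)) sums (2 / (1 - q))" by simp
  have g2: "(\<lambda>t. q ^ (t + 1)) sums (q * (1 / (1 - q)))" using sums_mult[OF g, of q] by simp
  have "(\<lambda>n. if even n then q ^ (n div 2) else q ^ ((n - 1) div 2 + 1)) sums (q * (1 / (1 - q)) + 1 / (1 - q))"
    by (rule sums_if[OF g2 g])
  moreover have "(\<lambda>n. if even n then q ^ (n div 2) else q ^ ((n - 1) div 2 + 1)) = (\<lambda>t. q ^ ((t + 1) div 2))"
  proof (rule ext)
    fix n :: nat
    show "(if even n then q ^ (n div 2) else q ^ ((n - 1) div 2 + 1)) = q ^ ((n + 1) div 2)"
    proof (cases "even n")
      case False
      then obtain m where "n = 2 * m + 1" by (rule oddE)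
      then show ?thesis by simp
    next
      case True
      then obtain m where "n = 2 * m" by (rule evenE)
      then show ?thesis by simp
    qed
  qed
  ultimately show "(\<lambda>t. q ^ ((t + 1) div 2)) sums ((1 + q) / (1 - q))"
    by (simp add: add_divide_distrib add.commute)
qed


lemma both_mono: "both_open_after A \<omega> t \<Longrightarrow> t \<le> s \<Longrightarrow> both_open_after A \<omega> s"
  unfolding both_open_after_def door_open_after_def by (meson order_less_le_trans)

theorem mainTheorem17:
  fixes p :: real
  assumes "0 < p" and "p \<le> 1"
  shows "expected_knocks p A_simp = ennreal (3 / p - 1)"
proof -
  define q where "q = 1 - p"
  have q: "0 \<le> q" "q < 1" using assms by (auto simp: q_def)
  define X where "X t = (\<integral>\<^sup>+ \<omega>. (if both_open_after A_simp \<omega> t then 0 else 1) \<partial>knock_space p)" for t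
  have exp: "expected_knocks p A_simp = (\<Sum>t. X t)"
  proof -
    have "expected_knocks p A_simp =
        (\<integral>\<^sup>+ \<omega>. (\<Sum>t. (if both_open_after A_simp \<omega> t then 0 else 1)) \<partial>knock_space p)"
      unfolding expected_knocks_def knocks_until_open_def
      by (intro nn_integral_cong) (rule enat_sum, rule both_mono)
    also have "\<dots> = (\<Sum>t. X t)" unfolding X_def
      by (rule nn_integral_suminf) (unfold knock_space_def both_open_after_def door_open_after_def, measurable)
    finally show ?thesis .
  qed
  have key: "X t + ennreal (q ^ t) = ennreal (q ^ ((t + 1) div 2)) + ennreal (q ^ (t div 2))" for t
  proof -
    let ?E = "\<lambda>S \<omega>. (if \<forall>k<t. S k \<longrightarrow> \<not> \<omega> !! k then 1 else 0) :: ennreal"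
    have m: "\<And>S. ?E S \<in> borel_measurable (knock_space p)" unfolding knock_space_def by measurable
    have m0: "(\<lambda>\<omega>. (if both_open_after A_simp \<omega> t then 0 else 1) :: ennreal) \<in> borel_measurable (knock_space p)"
      unfolding knock_space_def both_open_after_def door_open_after_def by measurable
    have A12: "\<And>k. A_simp k = 1 \<or> A_simp k = 2" by (simp add: A_simp_def)
    have pw: "(if both_open_after A_simp \<omega> t then 0 else 1) + ?E (\<lambda>_. True) \<omega>
          = ?E (\<lambda>k. A_simp k = 1) \<omega> + ?E (\<lambda>k. A_simp k = 2) \<omega>" for \<omega>
      using A12 unfolding both_open_after_def door_open_after_def
      by auto
    have "X t + ennreal (q ^ t) = (\<integral>\<^sup>+ \<omega>. (if both_open_after A_simp \<omega> t then 0 else 1) + ?E (\<lambda>_. True) \<omega> \<partial>knock_space p)"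
      unfolding X_def q_def using prob_block[of p t "\<lambda>_. True"] assms
      by (subst nn_integral_add[OF m0 m]) simp
    also have "\<dots> = (\<integral>\<^sup>+ \<omega>. ?E (\<lambda>k. A_simp k = 1) \<omega> + ?E (\<lambda>k. A_simp k = 2) \<omega> \<partial>knock_space p)"
      by (simp only: pw)
    also have "\<dots> = ennreal (q ^ ((t + 1) div 2)) + ennreal (q ^ (t div 2))"
      unfolding q_def using prob_block[of p t "\<lambda>k. A_simp k = 1"] prob_block[of p t "\<lambda>k. A_simp k = 2"] assms card_all[of t]
      by (subst nn_integral_add[OF m m]) simp
    finally show ?thesis .
  qed
  have s0: "(\<Sum>t. ennreal (q ^ t)) = ennreal (1 / p)"
    using real_sums(1)[OF q] q by (intro sums_unique[symmetric]) (simp add: q_def)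
  have s1: "(\<Sum>t. ennreal (q ^ ((t + 1) div 2))) = ennreal (2 / p - 1)"
  proof -
    have "(1 + q) / (1 - q) = 2 / p - 1" using assms by (simp add: q_def field_simps)
    moreover have "0 \<le> 2 / p - 1" using assms by (simp add: field_simps)
    ultimately show ?thesis
      using real_sums(3)[OF q] q by (intro sums_unique[symmetric]) simp
  qed
  have s2: "(\<Sum>t. ennreal (q ^ (t div 2))) = ennreal (2 / p)"
    using real_sums(2)[OF q] q assms by (intro sums_unique[symmetric]) (simp add: q_def)
  have "(\<Sum>t. X t) + ennreal (1 / p) = (\<Sum>t. X t + ennreal (q ^ t))"
  proof -
    have "(\<Sum>t. X t + ennreal (q ^ t)) = (\<Sum>t. X t) + (\<Sum>t. ennreal (q ^ t))"
      by (rule suminf_add[symmetric]) auto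
    then show ?thesis by (simp only: s0)
  qed
  also have "\<dots> = (\<Sum>t. ennreal (q ^ ((t + 1) div 2)) + ennreal (q ^ (t div 2)))"
    by (simp only: key)
  also have "\<dots> = ennreal (2 / p - 1) + ennreal (2 / p)"
  proof -
    have "(\<Sum>t. ennreal (q ^ ((t + 1) div 2)) + ennreal (q ^ (t div 2))) = (\<Sum>t. ennreal (q ^ ((t + 1) div 2))) + (\<Sum>t. ennreal (q ^ (t div 2)))"
      by (rule suminf_add[symmetric]) auto
    then show ?thesis by (simp only: s1 s2)
  qed
  also have "\<dots> = ennreal (3 / p - 1) + ennreal (1 / p)"
  proof -
    have "0 \<le> 2 / p - 1" "0 \<le> 3 / p - 1" using assms by (simp_all add: field_simps)
    then show ?thesis using assms by (simp add: ennreal_plus[symmetric] del: ennreal_plus)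
  qed
  finally have "ennreal (1 / p) + (\<Sum>t. X t) = ennreal (1 / p) + ennreal (3 / p - 1)"
    by (metis add.commute)
  then have "(\<Sum>t. X t) = ennreal (3 / p - 1)" by (simp add: ennreal_add_left_cancel)
  then show ?thesis using exp by simp
qed

end
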